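(* Let $N\ge 1$, let $a_1,\dots,a_N>0$, $T_1,\dots,T_N\ge 0$ and $P_{\mathrm{tot}}>0$. For $P_i\ge 0$ let $r_i(P_i)=\log_2(1+a_iP_i)$ and $J(\mathbf P)=\sum_{i=1}^N (r_i(P_i)-T_i)^2$. Consider the problem of minimizing $J(\mathbf P)$ subject to $\sum_{i=1}^N P_i\le P_{\mathrm{tot}}$ and $P_i\ge 0$ for all $i$. Define $\bar P_i=(2^{T_i}-1)/a_i$, which is the unique power with $r_i(\bar P_i)=T_i$. Then every optimal solution $\mathbf P^*$ of this problem satisfies $P_i^*\le \bar P_i$ for all $i$. *)

theory Defs
  imports Complex_Main
begin

definition rate :: "real \<Rightarrow> real \<Rightarrow> real" where
  "rate a p = log 2 (1 + a * p)"

definition J :: "nat \<Rightarrow> (nat \<Rightarrow> real) \<Rightarrow> (nat \<Rightarrow> real) \<Rightarrow> (nat \<Rightarrow> real) \<Rightarrow> real" where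
  "J N a T P = (\<Sum>i<N. (rate (a i) (P i) - T i)^2)"

definition feasible :: "nat \<Rightarrow> real \<Rightarrow> (nat \<Rightarrow> real) \<Rightarrow> bool" where
  "feasible N Ptot P \<longleftrightarrow> (\<Sum>i<N. P i) \<le> Ptot \<and> (\<forall>i<N. P i \<ge> 0)"

definition optimal :: "nat \<Rightarrow> (nat \<Rightarrow> real) \<Rightarrow> (nat \<Rightarrow> real) \<Rightarrow> real \<Rightarrow> (nat \<Rightarrow> real) \<Rightarrow> bool" where
  "optimal N a T Ptot P \<longleftrightarrow> feasible N Ptot P \<and>
     (\<forall>Q. feasible N Ptot Q \<longrightarrow> J N a T P \<le> J N a T Q)"

definition Pbar :: "real \<Rightarrow> real \<Rightarrow> real" where
  "Pbar a t = (2 powr t - 1) / a"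

end

theory Submission
  imports Defs
begin

lemma rate_Pbar: assumes "a > 0" shows "rate a (Pbar a t) = t"
  using assms by (simp add: rate_def Pbar_def)

theorem proposition1:
  fixes N :: nat and a T :: "nat \<Rightarrow> real" and Ptot :: real and Pstar :: "nat \<Rightarrow> real"
  assumes "N \<ge> 1"
    and "\<forall>i<N. a i > 0"
    and "\<forall>i<N. T i \<ge> 0"
    and "Ptot > 0"
    and "optimal N a T Ptot Pstar"
  shows "\<forall>i<N. Pstar i \<le> Pbar (a i) (T i)"
proof (intro allI impI, rule ccontr)
  fix k assume k: "k < N" and nk: "\<not> Pstar k \<le> Pbar (a k) (T k)"
  have ak: "a k > 0" and tk: "T k \<ge> 0" using k assms by auto
  have feas: "feasible N Ptot Pstar" using assms(5) by (simp add: optimal_def)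
  have pb0: "Pbar (a k) (T k) \<ge> 0"
  proof -
    have "1 \<le> (2::real) powr T k" using tk by (simp add: ge_one_powr_ge_zero)
    then show ?thesis using ak by (simp add: Pbar_def)
  qed
  define Q where "Q = Pstar(k := Pbar (a k) (T k))"
  have kin: "k \<in> {..<N}" using k by simp
  have sQ: "(\<Sum>i<N. Q i) = Q k + (\<Sum>i\<in>{..<N}-{k}. Q i)"
    using sum.remove[OF _ kin] by simp
  have sP: "(\<Sum>i<N. Pstar i) = Pstar k + (\<Sum>i\<in>{..<N}-{k}. Pstar i)"
    using sum.remove[OF _ kin] by simp
  have same: "(\<Sum>i\<in>{..<N}-{k}. Q i) = (\<Sum>i\<in>{..<N}-{k}. Pstar i)"
    by (rule sum.cong) (auto simp: Q_def)
  have "feasible N Ptot Q"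
    using feas sQ sP same nk pb0 by (auto simp: feasible_def Q_def)
  then have le: "J N a T Pstar \<le> J N a T Q" using assms(5) by (simp add: optimal_def)
  let ?f = "\<lambda>P i. (rate (a i) (P i) - T i)^2"
  have jQ: "J N a T Q = ?f Q k + (\<Sum>i\<in>{..<N}-{k}. ?f Q i)"
    unfolding J_def using sum.remove[OF _ kin, of "?f Q"] by simp
  have jP: "J N a T Pstar = ?f Pstar k + (\<Sum>i\<in>{..<N}-{k}. ?f Pstar i)"
    unfolding J_def using sum.remove[OF _ kin, of "?f Pstar"] by simp
  have same2: "(\<Sum>i\<in>{..<N}-{k}. ?f Q i) = (\<Sum>i\<in>{..<N}-{k}. ?f Pstar i)"
    by (rule sum.cong) (auto simp: Q_def)
  have fQ: "?f Q k = 0" using rate_Pbar[OF ak] by (simp add: Q_def)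
  have "a k * Pbar (a k) (T k) < a k * Pstar k" using nk ak by simp
  then have "1 + a k * Pbar (a k) (T k) < 1 + a k * Pstar k" by simp
  moreover have "0 < 1 + a k * Pbar (a k) (T k)" using ak pb0 by (simp add: add_pos_nonneg)
  ultimately have "rate (a k) (Pbar (a k) (T k)) < rate (a k) (Pstar k)"
    unfolding rate_def by simp
  then have "T k < rate (a k) (Pstar k)" using rate_Pbar[OF ak] by simp
  then have "?f Pstar k > 0" by simp
  then show False using le jQ jP same2 fQ by linarith
qed

end
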